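(* Let $f:\mathbb{R}^n\to\mathbb{R}$ be continuously differentiable, $\varphi:\mathbb{R}^n\to\mathbb{R}$ convex, $\psi=f+\varphi$, and $\Lambda$ symmetric positive definite. Each of the two maps (a) $g(x)=\psi'(x;d_s(x))\,d_s(x)$ and (b) $g(x)=F^{\Lambda}_{\mathrm{nat}}(x)$ has the following property: whenever $g(x)\neq0$, there exist $r,\epsilon>0$ such that $\|g(y)\|\ge\epsilon$ for all $y\in B_r(x)$.
   Context: $\|\cdot\|$ is the Euclidean norm and $B_r(x)$ the open ball. $\psi'(x;d)$ is the directional derivative, $\partial\psi(x)=\nabla f(x)+\partial\varphi(x)$; $d_s(x)=\arg\min_{\|d\|\le1}\psi'(x;d)$ if $0\notin\partial\psi(x)$ and $d_s(x)=0$ otherwise. $\mathrm{prox}^{\Lambda}_{\varphi}(z)=\arg\min_y\varphi(y)+\frac12(y-z)^T\Lambda(y-z)$ and $F^{\Lambda}_{\mathrm{nat}}(x)=x-\mathrm{prox}^{\Lambda}_{\varphi}(x-\Lambda^{-1}\nabla f(x))$. *)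

theory Defs
  imports "HOL-Analysis.Analysis"
begin

definition grad :: "(real^'n \<Rightarrow> real) \<Rightarrow> real^'n \<Rightarrow> real^'n" where
  "grad f x = (THE g. (f has_derivative (\<lambda>h. g \<bullet> h)) (at x))"

definition dir_deriv :: "(real^'n \<Rightarrow> real) \<Rightarrow> real^'n \<Rightarrow> real^'n \<Rightarrow> real" where
  "dir_deriv psi x d = Lim (at_right (0::real)) (\<lambda>t. (psi (x + t *\<^sub>R d) - psi x) / t)"

definition subdiff :: "(real^'n \<Rightarrow> real) \<Rightarrow> real^'n \<Rightarrow> (real^'n) set" where
  "subdiff phi x = {v. \<forall>y. phi y \<ge> phi x + v \<bullet> (y - x)}"

definition subdiff_psi :: "(real^'n \<Rightarrow> real) \<Rightarrow> (real^'n \<Rightarrow> real) \<Rightarrow> real^'n \<Rightarrow> (real^'n) set" where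
  "subdiff_psi f phi x = (\<lambda>v. grad f x + v) ` subdiff phi x"

definition steepest_dir :: "(real^'n \<Rightarrow> real) \<Rightarrow> (real^'n \<Rightarrow> real) \<Rightarrow> real^'n \<Rightarrow> real^'n" where
  "steepest_dir f phi x =
     (if 0 \<notin> subdiff_psi f phi x then
        (SOME d. norm d \<le> 1 \<and>
           (\<forall>e. norm e \<le> 1 \<longrightarrow> dir_deriv (\<lambda>y. f y + phi y) x d \<le> dir_deriv (\<lambda>y. f y + phi y) x e))
      else 0)"

definition prox :: "real^'n^'n \<Rightarrow> (real^'n \<Rightarrow> real) \<Rightarrow> real^'n \<Rightarrow> real^'n" where
  "prox L phi z = (SOME y. \<forall>w. phi y + (1/2) * ((y - z) \<bullet> (L *v (y - z)))
                              \<le> phi w + (1/2) * ((w - z) \<bullet> (L *v (w - z))))"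

definition F_nat :: "real^'n^'n \<Rightarrow> (real^'n \<Rightarrow> real) \<Rightarrow> (real^'n \<Rightarrow> real) \<Rightarrow> real^'n \<Rightarrow> real^'n" where
  "F_nat L f phi x = x - prox L phi (x - matrix_inv L *v grad f x)"

definition locally_bounded_away :: "(real^'n \<Rightarrow> real^'n) \<Rightarrow> bool" where
  "locally_bounded_away g \<longleftrightarrow>
     (\<forall>x. g x \<noteq> 0 \<longrightarrow> (\<exists>r>0. \<exists>\<epsilon>>0. \<forall>y\<in>ball x r. norm (g y) \<ge> \<epsilon>))"

end

theory Submission
  imports Defs
begin

lemma linear_repr:
  fixes D :: "real^'n \<Rightarrow> real"
  assumes "linear D"
  shows "D = (\<lambda>h. (\<Sum>i\<in>Basis. D i *\<^sub>R i) \<bullet> h)"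
proof
  fix h :: "real^'n"
  have "D h = D (\<Sum>i\<in>Basis. (h \<bullet> i) *\<^sub>R i)" by (simp add: euclidean_representation)
  also have "\<dots> = (\<Sum>i\<in>Basis. (h \<bullet> i) * D i)"
    using assms by (simp add: linear_sum linear_scale)
  also have "\<dots> = (\<Sum>i\<in>Basis. D i *\<^sub>R i) \<bullet> h"
    unfolding inner_sum_left by (intro sum.cong refl) (simp add: inner_commute[of h])
  finally show "D h = (\<Sum>i\<in>Basis. D i *\<^sub>R i) \<bullet> h" .
qed

lemma grad_has:
  fixes f :: "real^'n \<Rightarrow> real"
  assumes "f differentiable (at x)"
  shows "(f has_derivative (\<lambda>h. grad f x \<bullet> h)) (at x)"
proof -
  obtain D where D: "(f has_derivative D) (at x)" using assms by (auto simp: differentiable_def)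
  define g where "g = (\<Sum>i\<in>Basis. D i *\<^sub>R i)"
  have Dg: "D = (\<lambda>h. g \<bullet> h)" unfolding g_def by (rule linear_repr[OF has_derivative_linear[OF D]])
  have ex: "(f has_derivative (\<lambda>h. g \<bullet> h)) (at x)" using D Dg by simp
  have uniq: "g' = g" if "(f has_derivative (\<lambda>h. g' \<bullet> h)) (at x)" for g'
  proof -
    have "(\<lambda>h. g' \<bullet> h) = (\<lambda>h. g \<bullet> h)" using has_derivative_unique[OF that ex] .
    then have "g' \<bullet> (g' - g) = g \<bullet> (g' - g)" by (rule fun_cong)
    then have "(g' - g) \<bullet> (g' - g) = 0" by (simp add: inner_diff_left)
    then show ?thesis by simp
  qed
  have "grad f x = g" unfolding grad_def
    by (rule the_equality[where a=g and P="\<lambda>g. (f has_derivative (\<lambda>h. g \<bullet> h)) (at x)", OF ex uniq])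
  then show ?thesis using ex by simp
qed

lemma quot_f:
  fixes f :: "real^'n \<Rightarrow> real"
  assumes "f differentiable (at y)"
  shows "((\<lambda>t. (f (y + t *\<^sub>R d) - f y) / t) \<longlongrightarrow> grad f y \<bullet> d) (at_right 0)"
proof -
  have h1: "((\<lambda>t. y + t *\<^sub>R d) has_derivative (\<lambda>t. t *\<^sub>R d)) (at (0::real))"
    by (auto intro!: derivative_eq_intros)
  have h2: "(f has_derivative (\<lambda>h. grad f y \<bullet> h)) (at (y + 0 *\<^sub>R d))"
    using grad_has[OF assms] by simp
  have hd: "((\<lambda>t. f (y + t *\<^sub>R d)) has_derivative (\<lambda>t. grad f y \<bullet> (t *\<^sub>R d))) (at (0::real))"
    using has_derivative_compose[OF h1 h2] by (simp add: o_def)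
  have "(\<lambda>t. grad f y \<bullet> (t *\<^sub>R d)) = (*) (grad f y \<bullet> d)" by (auto simp: fun_eq_iff)
  then have "((\<lambda>t. f (y + t *\<^sub>R d)) has_field_derivative (grad f y \<bullet> d)) (at (0::real))"
    using hd by (simp add: has_field_derivative_def)
  then have "((\<lambda>t. (f (y + t *\<^sub>R d) - f y) / t) \<longlongrightarrow> grad f y \<bullet> d) (at 0)"
    by (simp add: DERIV_def)
  then show ?thesis by (rule tendsto_mono[OF at_le, rotated]) simp
qed


definition PD :: "(real^'n \<Rightarrow> real) \<Rightarrow> real^'n \<Rightarrow> real^'n \<Rightarrow> real" where
  "PD phi y d = Inf ((\<lambda>t. (phi (y + t *\<^sub>R d) - phi y) / t) ` {0<..})"

lemma quot_mono:
  fixes phi :: "real^'n \<Rightarrow> real"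
  assumes cv: "convex_on UNIV phi" and a: "0 < a" "a \<le> b"
  shows "(phi (y + a *\<^sub>R d) - phi y) / a \<le> (phi (y + b *\<^sub>R d) - phi y) / b"
proof -
  have b: "b > 0" using a by simp
  have pt: "(1 - a/b) *\<^sub>R y + (a/b) *\<^sub>R (y + b *\<^sub>R d) = y + a *\<^sub>R d"
    using b by (simp add: algebra_simps)
  have "phi ((1 - a/b) *\<^sub>R y + (a/b) *\<^sub>R (y + b *\<^sub>R d)) \<le> (1 - a/b) * phi y + (a/b) * phi (y + b *\<^sub>R d)"
    using a b by (intro convex_onD[OF cv]) auto
  then have "phi (y + a *\<^sub>R d) - phi y \<le> (a/b) * (phi (y + b *\<^sub>R d) - phi y)"
    unfolding pt by (simp add: algebra_simps)
  then have "phi (y + a *\<^sub>R d) - phi y \<le> ((phi (y + b *\<^sub>R d) - phi y) / b) * a" by (simp add: ac_simps)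
  then show ?thesis using a by (simp add: pos_divide_le_eq)
qed

lemma quot_bnd:
  fixes phi :: "real^'n \<Rightarrow> real"
  assumes cv: "convex_on UNIV phi" and a: "0 < a"
  shows "phi y - phi (y - d) \<le> (phi (y + a *\<^sub>R d) - phi y) / a"
proof -
  have pt: "(1 - 1/(1+a)) *\<^sub>R (y - d) + (1/(1+a)) *\<^sub>R (y + a *\<^sub>R d) = y"
  proof -
    have e: "1/(1+a) + a/(1+a) = 1" using a by (simp add: add_divide_distrib[symmetric])
    have "(1 - 1/(1+a)) *\<^sub>R (y - d) + (1/(1+a)) *\<^sub>R (y + a *\<^sub>R d)
        = y + ((1/(1+a) + a/(1+a)) - 1) *\<^sub>R d"
      by (simp add: algebra_simps)
    then show ?thesis unfolding e by simp
  qed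
  have "phi ((1 - 1/(1+a)) *\<^sub>R (y - d) + (1/(1+a)) *\<^sub>R (y + a *\<^sub>R d))
      \<le> (1 - 1/(1+a)) * phi (y - d) + (1/(1+a)) * phi (y + a *\<^sub>R d)"
    using a by (intro convex_onD[OF cv]) auto
  then have "phi y \<le> (1 - 1/(1+a)) * phi (y - d) + (1/(1+a)) * phi (y + a *\<^sub>R d)"
    unfolding pt .
  then have "(1+a) * phi y \<le> (1+a) * ((1 - 1/(1+a)) * phi (y - d) + (1/(1+a)) * phi (y + a *\<^sub>R d))"
    using a by (intro mult_left_mono) auto
  also have "\<dots> = a * phi (y - d) + phi (y + a *\<^sub>R d)"
  proof -
    have ne: "1 + a \<noteq> 0" using a by simp
    have "(1+a) * (1 - 1/(1+a)) = a" using ne by (simp add: right_diff_distrib)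
    moreover have "(1+a) * (1/(1+a)) = 1" using ne by simp
    ultimately show ?thesis using ne by (simp add: distrib_left mult.assoc[symmetric])
  qed
  finally have "(1+a) * phi y \<le> a * phi (y - d) + phi (y + a *\<^sub>R d)" .
  then have "a * (phi y - phi (y - d)) \<le> phi (y + a *\<^sub>R d) - phi y"
    by (simp add: algebra_simps)
  then show ?thesis using a by (simp add: field_simps)
qed

lemma quot_phi:
  fixes phi :: "real^'n \<Rightarrow> real"
  assumes cv: "convex_on UNIV phi"
  shows "((\<lambda>t. (phi (y + t *\<^sub>R d) - phi y) / t) \<longlongrightarrow> PD phi y d) (at_right 0)"
proof -
  have "((\<lambda>t. (phi (y + t *\<^sub>R d) - phi y) / t) \<longlongrightarrow>
     Inf ((\<lambda>t. (phi (y + t *\<^sub>R d) - phi y) / t) ` ({0<..} \<inter> UNIV))) (at 0 within ({0<..} \<inter> UNIV))"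
    by (rule Lim_right_bound[where K="phi y - phi (y - d)"])
       (auto intro: quot_mono[OF cv] quot_bnd[OF cv])
  then show ?thesis unfolding PD_def by simp
qed

lemma PD_le:
  fixes phi :: "real^'n \<Rightarrow> real"
  assumes cv: "convex_on UNIV phi"
  shows "PD phi y d \<le> phi (y + d) - phi y"
proof -
  have "PD phi y d \<le> (phi (y + 1 *\<^sub>R d) - phi y) / 1"
    unfolding PD_def
    by (rule cInf_lower, rule image_eqI[where x=1]) (auto intro!: bdd_belowI[where m="phi y - phi (y - d)"] quot_bnd[OF cv])
  then show ?thesis by simp
qed

lemma PD_zero: "PD phi y 0 = 0"
  unfolding PD_def by simp

lemma PD_convex:
  fixes phi :: "real^'n \<Rightarrow> real"
  assumes cv: "convex_on UNIV phi"
  shows "convex_on UNIV (PD phi y)"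
proof (rule convex_onI)
  fix u :: real and a b :: "real^'n"
  assume u: "0 < u" "u < 1"
  let ?q = "\<lambda>d t. (phi (y + t *\<^sub>R d) - phi y) / t"
  have ev: "\<forall>\<^sub>F t in at_right 0. ?q ((1 - u) *\<^sub>R a + u *\<^sub>R b) t \<le> (1 - u) * ?q a t + u * ?q b t"
    using eventually_at_right_less
  proof (rule eventually_mono)
    fix t :: real assume t: "0 < t"
    have pt: "y + t *\<^sub>R ((1 - u) *\<^sub>R a + u *\<^sub>R b) = (1 - u) *\<^sub>R (y + t *\<^sub>R a) + u *\<^sub>R (y + t *\<^sub>R b)"
      by (simp add: algebra_simps)
    have "phi (y + t *\<^sub>R ((1 - u) *\<^sub>R a + u *\<^sub>R b)) \<le> (1 - u) * phi (y + t *\<^sub>R a) + u * phi (y + t *\<^sub>R b)"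
      unfolding pt using u by (intro convex_onD[OF cv]) auto
    then have "phi (y + t *\<^sub>R ((1 - u) *\<^sub>R a + u *\<^sub>R b)) - phi y \<le> (1 - u) * (phi (y + t *\<^sub>R a) - phi y) + u * (phi (y + t *\<^sub>R b) - phi y)"
      by (simp add: algebra_simps)
    then have "(phi (y + t *\<^sub>R ((1 - u) *\<^sub>R a + u *\<^sub>R b)) - phi y) / t \<le> ((1 - u) * (phi (y + t *\<^sub>R a) - phi y) + u * (phi (y + t *\<^sub>R b) - phi y)) / t"
      using t by (simp add: divide_right_mono)
    then show "?q ((1 - u) *\<^sub>R a + u *\<^sub>R b) t \<le> (1 - u) * ?q a t + u * ?q b t"
      by (simp add: add_divide_distrib)
  qed
  have l1: "(?q ((1 - u) *\<^sub>R a + u *\<^sub>R b) \<longlongrightarrow> PD phi y ((1 - u) *\<^sub>R a + u *\<^sub>R b)) (at_right 0)"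
    by (rule quot_phi[OF cv])
  have l2: "((\<lambda>t. (1 - u) * ?q a t + u * ?q b t) \<longlongrightarrow> (1 - u) * PD phi y a + u * PD phi y b) (at_right 0)"
    by (intro tendsto_intros quot_phi[OF cv])
  show "PD phi y ((1 - u) *\<^sub>R a + u *\<^sub>R b) \<le> (1 - u) * PD phi y a + u * PD phi y b"
    by (rule tendsto_le[OF _ l2 l1 ev]) simp
qed (rule convex_UNIV)

lemma quot_homog:
  fixes F :: "real^'n \<Rightarrow> real"
  assumes lim: "((\<lambda>t. (F (y + t *\<^sub>R d) - F y) / t) \<longlongrightarrow> a) (at_right 0)" and c: "c > 0"
  shows "((\<lambda>t. (F (y + t *\<^sub>R (c *\<^sub>R d)) - F y) / t) \<longlongrightarrow> c * a) (at_right 0)"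
proof -
  have fl: "filterlim (\<lambda>t. c * t) (at_right 0) (at_right (0::real))"
    unfolding filterlim_at
  proof
    show "\<forall>\<^sub>F t in at_right 0. c * t \<in> {0<..} \<and> c * t \<noteq> 0"
      using eventually_at_right_less by (rule eventually_mono) (use c in auto)
    have "((\<lambda>t. c * t) \<longlongrightarrow> c * 0) (at_right (0::real))"
      by (intro tendsto_intros)
    then show "((\<lambda>t. c * t) \<longlongrightarrow> 0) (at_right (0::real))" by simp
  qed
  have "((\<lambda>t. (F (y + (c * t) *\<^sub>R d) - F y) / (c * t)) \<longlongrightarrow> a) (at_right 0)"
    using filterlim_compose[OF lim fl] .
  then have "((\<lambda>t. c * ((F (y + (c * t) *\<^sub>R d) - F y) / (c * t))) \<longlongrightarrow> c * a) (at_right 0)"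
    by (intro tendsto_intros)
  moreover have "c * ((F (y + (c * t) *\<^sub>R d) - F y) / (c * t)) = (F (y + t *\<^sub>R (c *\<^sub>R d)) - F y) / t" for t
    using c by (cases "t = 0") (auto simp: field_simps)
  ultimately show ?thesis by simp
qed


lemma psi_quot:
  fixes f phi :: "real^'n \<Rightarrow> real"
  assumes fd: "f differentiable (at y)" and cv: "convex_on UNIV phi"
  shows "((\<lambda>t. ((\<lambda>y. f y + phi y) (y + t *\<^sub>R d) - (\<lambda>y. f y + phi y) y) / t)
           \<longlongrightarrow> grad f y \<bullet> d + PD phi y d) (at_right 0)"
proof -
  have "((\<lambda>t. (f (y + t *\<^sub>R d) - f y) / t + (phi (y + t *\<^sub>R d) - phi y) / t)
           \<longlongrightarrow> grad f y \<bullet> d + PD phi y d) (at_right 0)"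
    by (intro tendsto_add quot_f[OF fd] quot_phi[OF cv])
  moreover have "(f (y + t *\<^sub>R d) - f y) / t + (phi (y + t *\<^sub>R d) - phi y) / t
      = ((\<lambda>y. f y + phi y) (y + t *\<^sub>R d) - (\<lambda>y. f y + phi y) y) / t" for t
    by (simp add: add_divide_distrib[symmetric] algebra_simps)
  ultimately show ?thesis by simp
qed

lemma dd_eq:
  fixes f phi :: "real^'n \<Rightarrow> real"
  assumes fd: "f differentiable (at y)" and cv: "convex_on UNIV phi"
  shows "dir_deriv (\<lambda>y. f y + phi y) y d = grad f y \<bullet> d + PD phi y d"
  unfolding dir_deriv_def by (rule tendsto_Lim[OF trivial_limit_at_right_real psi_quot[OF fd cv]])

lemma dd_homog:
  fixes f phi :: "real^'n \<Rightarrow> real"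
  assumes fd: "f differentiable (at y)" and cv: "convex_on UNIV phi" and c: "c > 0"
  shows "dir_deriv (\<lambda>y. f y + phi y) y (c *\<^sub>R d) = c * dir_deriv (\<lambda>y. f y + phi y) y d"
proof -
  have "((\<lambda>t. ((\<lambda>y. f y + phi y) (y + t *\<^sub>R (c *\<^sub>R d)) - (\<lambda>y. f y + phi y) y) / t)
           \<longlongrightarrow> c * (grad f y \<bullet> d + PD phi y d)) (at_right 0)"
    by (rule quot_homog[OF psi_quot[OF fd cv] c])
  then have "dir_deriv (\<lambda>y. f y + phi y) y (c *\<^sub>R d) = c * (grad f y \<bullet> d + PD phi y d)"
    unfolding dir_deriv_def by (rule tendsto_Lim[OF trivial_limit_at_right_real])
  then show ?thesis using dd_eq[OF fd cv] by simp
qed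

lemma dd_cont:
  fixes f phi :: "real^'n \<Rightarrow> real"
  assumes fd: "f differentiable (at y)" and cv: "convex_on UNIV phi"
  shows "continuous_on UNIV (dir_deriv (\<lambda>y. f y + phi y) y)"
proof -
  have c1: "continuous_on UNIV (PD phi y)"
    by (rule convex_on_continuous[OF open_UNIV PD_convex[OF cv]])
  have "continuous_on UNIV (\<lambda>d. grad f y \<bullet> d + PD phi y d)"
    by (intro continuous_intros c1)
  then show ?thesis using dd_eq[OF fd cv] by simp
qed

lemma part_a:
  fixes f phi :: "real^'n \<Rightarrow> real"
  assumes f_diff: "\<forall>x. f differentiable (at x)"
    and f_C1: "continuous_on UNIV (grad f)"
    and cv: "convex_on UNIV phi"
  shows "locally_bounded_away
           (\<lambda>x. dir_deriv (\<lambda>y. f y + phi y) x (steepest_dir f phi x) *\<^sub>R steepest_dir f phi x)"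
  unfolding locally_bounded_away_def
proof (intro allI impI)
  fix x
  let ?DD = "dir_deriv (\<lambda>y. f y + phi y)"
  assume gx: "?DD x (steepest_dir f phi x) *\<^sub>R steepest_dir f phi x \<noteq> 0"
  have phic: "continuous_on UNIV phi" by (rule convex_on_continuous[OF open_UNIV cv])
  have nz: "0 \<notin> subdiff_psi f phi x"
    using gx unfolding steepest_dir_def by auto
  have "- grad f x \<notin> subdiff phi x"
  proof
    assume "- grad f x \<in> subdiff phi x"
    then have "0 \<in> subdiff_psi f phi x" unfolding subdiff_psi_def
      by (rule rev_image_eqI) simp
    then show False using nz by simp
  qed
  then obtain w where w: "\<not> phi w \<ge> phi x + (- grad f x) \<bullet> (w - x)"
    unfolding subdiff_def by auto
  define d0 where "d0 = w - x"
  define h where "h = (\<lambda>y. grad f y \<bullet> d0 + phi (y + d0) - phi y)"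
  have hx: "h x < 0" using w unfolding h_def d0_def by (simp add: algebra_simps)
  have d0nz: "d0 \<noteq> 0" using hx unfolding h_def by auto
  have hc: "continuous_on UNIV h"
    unfolding h_def
    by (intro continuous_intros f_C1 phic continuous_on_compose2[OF phic]) auto
  have "open {y. h y < h x / 2}"
    by (rule open_Collect_less[OF hc]) (intro continuous_intros)
  moreover have "x \<in> {y. h y < h x / 2}" using hx by simp
  ultimately obtain r where r: "r > 0" "ball x r \<subseteq> {y. h y < h x / 2}"
    using open_contains_ball by blast
  define \<epsilon> where "\<epsilon> = - (h x / 2) / norm d0"
  have \<epsilon>pos: "\<epsilon> > 0" unfolding \<epsilon>_def using hx d0nz by (simp add: divide_neg_pos)
  have "\<forall>y\<in>ball x r. norm (?DD y (steepest_dir f phi y) *\<^sub>R steepest_dir f phi y) \<ge> \<epsilon>"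
  proof
    fix y assume y: "y \<in> ball x r"
    have hy: "h y < h x / 2" using y r by auto
    have fd: "f differentiable (at y)" using f_diff by simp
    have nzy: "0 \<notin> subdiff_psi f phi y"
    proof
      assume "0 \<in> subdiff_psi f phi y"
      then obtain v where v: "v \<in> subdiff phi y" "0 = grad f y + v" unfolding subdiff_psi_def by auto
      then have "v = - grad f y" by (metis add.commute add_eq_0_iff)
      then have "phi (y + d0) \<ge> phi y + (- grad f y) \<bullet> (y + d0 - y)"
        using v(1) unfolding subdiff_def by blast
      then have "h y \<ge> 0" unfolding h_def by simp
      then show False using hy hx by simp
    qed
    let ?P = "\<lambda>d. norm d \<le> 1 \<and> (\<forall>e. norm e \<le> 1 \<longrightarrow> ?DD y d \<le> ?DD y e)"
    have sd: "steepest_dir f phi y = (SOME d. ?P d)"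
      unfolding steepest_dir_def using nzy by simp
    have "\<exists>d\<in>cball 0 1. \<forall>e\<in>cball 0 1. ?DD y d \<le> ?DD y e"
      by (rule continuous_attains_inf[OF compact_cball])
         (auto intro: continuous_on_subset[OF dd_cont[OF fd cv]])
    then have "\<exists>d. ?P d" by auto
    then have Ps: "?P (steepest_dir f phi y)" unfolding sd by (rule someI_ex)
    define s where "s = steepest_dir f phi y"
    have s1: "norm s \<le> 1" and smin: "\<And>e. norm e \<le> 1 \<Longrightarrow> ?DD y s \<le> ?DD y e"
      using Ps unfolding s_def by auto
    define u where "u = (1 / norm d0) *\<^sub>R d0"
    have nu: "norm u = 1" unfolding u_def using d0nz by simp
    have "?DD y d0 = grad f y \<bullet> d0 + PD phi y d0" by (rule dd_eq[OF fd cv])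
    also have "\<dots> \<le> h y" unfolding h_def using PD_le[OF cv, of y d0] by simp
    finally have a1: "?DD y d0 < h x / 2" using hy by simp
    have a2: "?DD y u = (1 / norm d0) * ?DD y d0"
      unfolding u_def by (rule dd_homog[OF fd cv]) (use d0nz in simp)
    have "?DD y u < (1 / norm d0) * (h x / 2)"
    proof -
      have "(1 / norm d0) * ?DD y d0 < (1 / norm d0) * (h x / 2)"
        by (rule mult_strict_left_mono[OF a1]) (use d0nz in simp)
      then show ?thesis using a2 by simp
    qed
    also have "\<dots> = - \<epsilon>" unfolding \<epsilon>_def by simp
    finally have "?DD y u < - \<epsilon>" .
    then have Ds: "?DD y s < - \<epsilon>" using smin[of u] nu by simp
    have D0: "?DD y 0 = 0" using dd_eq[OF fd cv, of 0] PD_zero by simp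
    have snz: "s \<noteq> 0" using Ds D0 \<epsilon>pos by auto
    have "?DD y s \<le> ?DD y ((1 / norm s) *\<^sub>R s)" using snz by (intro smin) simp
    also have "\<dots> = (1 / norm s) * ?DD y s" by (rule dd_homog[OF fd cv]) (use snz in simp)
    finally have "norm s * ?DD y s \<le> ?DD y s" using snz by (simp add: field_simps)
    then have "(norm s - 1) * ?DD y s \<le> 0" by (simp add: algebra_simps)
    then have "norm s \<ge> 1" using Ds \<epsilon>pos by (simp add: mult_le_0_iff)
    then have ns: "norm s = 1" using s1 by simp
    have "norm (?DD y s *\<^sub>R s) = \<bar>?DD y s\<bar>" using ns by simp
    also have "\<dots> \<ge> \<epsilon>" using Ds by simp
    finally show "norm (?DD y (steepest_dir f phi y) *\<^sub>R steepest_dir f phi y) \<ge> \<epsilon>"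
      unfolding s_def .
  qed
  then show "\<exists>r>0. \<exists>\<epsilon>>0. \<forall>y\<in>ball x r. norm (?DD y (steepest_dir f phi y) *\<^sub>R steepest_dir f phi y) \<ge> \<epsilon>"
    using r(1) \<epsilon>pos by blast
qed


lemma Q_cont: fixes L :: "real^'n^'n" shows "continuous_on UNIV (\<lambda>v::real^'n. v \<bullet> (L *v v))"
  by (intro continuous_intros bounded_linear.continuous_on[OF matrix_vector_mul_bounded_linear])

lemma Q_scale: fixes L :: "real^'n^'n" shows "(c *\<^sub>R v) \<bullet> (L *v (c *\<^sub>R v)) = c^2 * (v \<bullet> (L *v v))"
  by (simp only: matrix_vector_mult_scaleR inner_scaleR_left inner_scaleR_right power2_eq_square mult.assoc)

lemma Q_expand: fixes L :: "real^'n^'n" shows "(a + t *\<^sub>R b) \<bullet> (L *v (a + t *\<^sub>R b)) =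
   a \<bullet> (L *v a) + t * (a \<bullet> (L *v b) + b \<bullet> (L *v a)) + t^2 * (b \<bullet> (L *v b))"
  unfolding matrix_vector_right_distrib matrix_vector_mult_scaleR inner_add_left inner_add_right
      inner_scaleR_left inner_scaleR_right
  by (simp add: power2_eq_square algebra_simps)

lemma Q_lower:
  fixes L :: "real^'n^'n"
  assumes L_pd: "\<forall>v. v \<noteq> 0 \<longrightarrow> v \<bullet> (L *v v) > 0"
  shows "\<exists>lam>0. \<forall>v. v \<bullet> (L *v v) \<ge> lam * (norm v)^2"
proof -
  obtain v0 where v0: "v0 \<in> sphere (0::real^'n) 1" "\<forall>v\<in>sphere 0 1. v0 \<bullet> (L *v v0) \<le> v \<bullet> (L *v v)"
    using continuous_attains_inf[OF compact_sphere _ continuous_on_subset[OF Q_cont], of 0 1 L]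
    by (auto simp: sphere_eq_empty)
  define lam where "lam = v0 \<bullet> (L *v v0)"
  have "v0 \<noteq> 0" using v0(1) by auto
  then have lpos: "lam > 0" unfolding lam_def using L_pd by auto
  have "v \<bullet> (L *v v) \<ge> lam * (norm v)^2" for v
  proof (cases "v = 0")
    case True then show ?thesis by simp
  next
    case False
    define u where "u = (1 / norm v) *\<^sub>R v"
    have "u \<in> sphere 0 1" unfolding u_def using False by simp
    then have "lam \<le> u \<bullet> (L *v u)" using v0 unfolding lam_def by auto
    also have "\<dots> = (1 / norm v)^2 * (v \<bullet> (L *v v))" unfolding u_def by (rule Q_scale)
    finally have "lam * (norm v)^2 \<le> (1 / norm v)^2 * (v \<bullet> (L *v v)) * (norm v)^2"
      by (simp add: mult_right_mono)
    also have "\<dots> = v \<bullet> (L *v v)" using False by (simp add: field_simps)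
    finally show ?thesis .
  qed
  then show ?thesis using lpos by blast
qed

lemma L_bound:
  fixes L :: "real^'n^'n"
  shows "\<exists>C>0. \<forall>a b. \<bar>a \<bullet> (L *v b)\<bar> \<le> C * norm a * norm b"
proof -
  obtain C where C: "C > 0" "\<And>x. norm (L *v x) \<le> norm x * C"
    using bounded_linear.pos_bounded[OF matrix_vector_mul_bounded_linear[of L]] by blast
  have "\<bar>a \<bullet> (L *v b)\<bar> \<le> C * norm a * norm b" for a b
  proof -
    have "\<bar>a \<bullet> (L *v b)\<bar> \<le> norm a * norm (L *v b)" by (rule Cauchy_Schwarz_ineq2)
    also have "\<dots> \<le> norm a * (norm b * C)" by (intro mult_left_mono C(2)) simp
    finally show ?thesis by (simp add: ac_simps)
  qed
  then show ?thesis using C(1) by blast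
qed

lemma phi_growth:
  fixes phi :: "real^'n \<Rightarrow> real"
  assumes cv: "convex_on UNIV phi"
  shows "\<exists>M\<ge>0. \<forall>w. norm (w - z) \<ge> 1 \<longrightarrow> phi w \<ge> phi z - M * norm (w - z)"
proof -
  have phic: "continuous_on UNIV phi" by (rule convex_on_continuous[OF open_UNIV cv])
  obtain v0 where v0: "v0 \<in> sphere z 1" "\<forall>v\<in>sphere z 1. phi v0 \<le> phi v"
    using continuous_attains_inf[OF compact_sphere _ continuous_on_subset[OF phic], of z 1]
    by (auto simp: sphere_eq_empty)
  define M where "M = max 0 (phi z - phi v0)"
  have "phi w \<ge> phi z - M * norm (w - z)" if w: "norm (w - z) \<ge> 1" for w
  proof -
    define s where "s = norm (w - z)"
    have s1: "s \<ge> 1" using w unfolding s_def .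
    have pt: "(1 - 1/s) *\<^sub>R z + (1/s) *\<^sub>R w = z + (1/s) *\<^sub>R (w - z)"
      by (simp add: algebra_simps)
    have "phi ((1 - 1/s) *\<^sub>R z + (1/s) *\<^sub>R w) \<le> (1 - 1/s) * phi z + (1/s) * phi w"
      using s1 by (intro convex_onD[OF cv]) auto
    moreover have "z + (1/s) *\<^sub>R (w - z) \<in> sphere z 1"
      using s1 unfolding s_def by (cases "w = z") (auto simp: dist_norm)
    ultimately have "phi v0 \<le> (1 - 1/s) * phi z + (1/s) * phi w"
      using v0(2) unfolding pt by force
    then have "s * phi v0 \<le> s * ((1 - 1/s) * phi z + (1/s) * phi w)"
      using s1 by (intro mult_left_mono) auto
    also have "\<dots> = (s - 1) * phi z + phi w" using s1 by (simp add: field_simps)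
    finally have "phi w \<ge> phi z - s * (phi z - phi v0)" by (simp add: algebra_simps)
    moreover have "s * (phi z - phi v0) \<le> s * M" unfolding M_def using s1
      by (intro mult_left_mono) auto
    ultimately show ?thesis unfolding s_def by (simp add: ac_simps)
  qed
  moreover have "M \<ge> 0" unfolding M_def by simp
  ultimately show ?thesis by blast
qed


lemma prox_min:
  fixes phi :: "real^'n \<Rightarrow> real" and L :: "real^'n^'n"
  assumes cv: "convex_on UNIV phi" and L_pd: "\<forall>v. v \<noteq> 0 \<longrightarrow> v \<bullet> (L *v v) > 0"
  shows "\<forall>w. phi (prox L phi z) + (1/2) * ((prox L phi z - z) \<bullet> (L *v (prox L phi z - z)))
              \<le> phi w + (1/2) * ((w - z) \<bullet> (L *v (w - z)))"
proof -
  define H where "H = (\<lambda>w. phi w + (1/2) * ((w - z) \<bullet> (L *v (w - z))))"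
  have phic: "continuous_on UNIV phi" by (rule convex_on_continuous[OF open_UNIV cv])
  obtain lam where lam: "lam > 0" "\<And>v. v \<bullet> (L *v v) \<ge> lam * (norm v)^2"
    using Q_lower[OF L_pd] by blast
  obtain M where M: "M \<ge> 0" "\<And>w. norm (w - z) \<ge> 1 \<Longrightarrow> phi w \<ge> phi z - M * norm (w - z)"
    using phi_growth[OF cv, of z] by blast
  define R where "R = max 1 (2 * M / lam) + 1"
  have Hc: "continuous_on UNIV H" unfolding H_def
    by (intro continuous_intros phic continuous_on_compose2[OF Q_cont[of L]]) auto
  have Hz: "H z = phi z" unfolding H_def by simp
  have zin: "z \<in> cball z R" unfolding R_def by simp
  have "\<exists>p\<in>cball z R. \<forall>w\<in>cball z R. H p \<le> H w"
    by (rule continuous_attains_inf[OF compact_cball]) (use zin continuous_on_subset[OF Hc] in auto)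
  then obtain p where p: "p \<in> cball z R" "\<And>w. w \<in> cball z R \<Longrightarrow> H p \<le> H w"
    by blast
  have "H p \<le> H w" for w
  proof (cases "w \<in> cball z R")
    case True then show ?thesis using p by blast
  next
    case False
    define s where "s = norm (w - z)"
    have sR: "s > R" using False unfolding s_def by (simp add: dist_norm norm_minus_commute)
    then have s1: "s \<ge> 1" and s2: "s \<ge> 2 * M / lam" unfolding R_def by auto
    have "lam * s \<ge> 2 * M" using s2 lam(1) by (simp add: pos_divide_le_eq mult.commute)
    then have "s * (lam * s) \<ge> s * (2 * M)" using s1 by (intro mult_left_mono) auto
    then have key: "M * s \<le> (1/2) * (lam * s^2)" by (simp add: power2_eq_square algebra_simps)
    have "H w \<ge> phi z - M * s + (1/2) * (lam * s^2)"
    proof -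
      have "phi w \<ge> phi z - M * s" using M(2)[of w] s1 unfolding s_def by simp
      moreover have "(w - z) \<bullet> (L *v (w - z)) \<ge> lam * s^2" using lam(2) unfolding s_def by simp
      ultimately show ?thesis unfolding H_def by simp
    qed
    then have "H w \<ge> H z" using key Hz by simp
    then show ?thesis using p(2)[OF zin] by simp
  qed
  then have "\<exists>y. \<forall>w. H y \<le> H w" by blast
  then have "\<forall>w. H (prox L phi z) \<le> H w" unfolding prox_def H_def by (rule someI_ex)
  then show ?thesis unfolding H_def by simp
qed

lemma prox_vi:
  fixes phi :: "real^'n \<Rightarrow> real" and L :: "real^'n^'n"
  assumes cv: "convex_on UNIV phi"
    and min: "\<forall>w. phi p + (1/2) * ((p - z) \<bullet> (L *v (p - z))) \<le> phi w + (1/2) * ((w - z) \<bullet> (L *v (w - z)))"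
    and L_pd: "\<forall>v. v \<noteq> 0 \<longrightarrow> v \<bullet> (L *v v) > 0"
  shows "0 \<le> phi w - phi p + (1/2) * ((p - z) \<bullet> (L *v (w - p)) + (w - p) \<bullet> (L *v (p - z)))"
proof -
  define X where "X = phi w - phi p + (1/2) * ((p - z) \<bullet> (L *v (w - p)) + (w - p) \<bullet> (L *v (p - z)))"
  define K where "K = (1/2) * ((w - p) \<bullet> (L *v (w - p)))"
  have step: "0 \<le> X + t * K" if t: "0 < t" "t < 1" for t
  proof -
    have pt: "p + t *\<^sub>R (w - p) = (1 - t) *\<^sub>R p + t *\<^sub>R w" by (simp add: algebra_simps)
    have pz: "p + t *\<^sub>R (w - p) - z = (p - z) + t *\<^sub>R (w - p)" by (simp add: algebra_simps)
    have c: "phi (p + t *\<^sub>R (w - p)) \<le> (1 - t) * phi p + t * phi w"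
      unfolding pt using t by (intro convex_onD[OF cv]) auto
    have "phi p + (1/2) * ((p - z) \<bullet> (L *v (p - z))) \<le>
          phi (p + t *\<^sub>R (w - p)) + (1/2) * ((p + t *\<^sub>R (w - p) - z) \<bullet> (L *v (p + t *\<^sub>R (w - p) - z)))"
      using min by blast
    also have "\<dots> = phi (p + t *\<^sub>R (w - p)) + (1/2) * ((p - z) \<bullet> (L *v (p - z))
        + t * ((p - z) \<bullet> (L *v (w - p)) + (w - p) \<bullet> (L *v (p - z))) + t^2 * ((w - p) \<bullet> (L *v (w - p))))"
      unfolding pz Q_expand ..
    finally have "0 \<le> t * X + t * (t * K)" using c unfolding X_def K_def
      by (simp add: power2_eq_square algebra_simps)
    then have "0 \<le> t * (X + t * K)" by (simp add: algebra_simps)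
    then show ?thesis using t by (simp add: zero_le_mult_iff)
  qed
  have lim: "((\<lambda>t. X + t * K) \<longlongrightarrow> X) (at_right 0)"
  proof -
    have "((\<lambda>t. X + t * K) \<longlongrightarrow> X + 0 * K) (at_right 0)" by (intro tendsto_intros)
    then show ?thesis by simp
  qed
  have ev: "\<forall>\<^sub>F t in at_right 0. 0 \<le> X + t * K"
    using eventually_at_right_real[of 0 1] by (rule eventually_mono) (auto intro: step)
  have "0 \<le> X" by (rule tendsto_lowerbound[OF lim ev]) simp
  then show ?thesis unfolding X_def .
qed

lemma prox_lip:
  fixes phi :: "real^'n \<Rightarrow> real" and L :: "real^'n^'n"
  assumes cv: "convex_on UNIV phi" and L_pd: "\<forall>v. v \<noteq> 0 \<longrightarrow> v \<bullet> (L *v v) > 0"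
  shows "\<exists>K\<ge>0. \<forall>z1 z2. norm (prox L phi z2 - prox L phi z1) \<le> K * norm (z2 - z1)"
proof -
  obtain lam where lam: "lam > 0" "\<And>v. v \<bullet> (L *v v) \<ge> lam * (norm v)^2"
    using Q_lower[OF L_pd] by blast
  obtain C where C: "C > 0" "\<And>a b. \<bar>a \<bullet> (L *v b)\<bar> \<le> C * norm a * norm b"
    using L_bound[of L] by blast
  have "norm (prox L phi z2 - prox L phi z1) \<le> (C / lam) * norm (z2 - z1)" for z1 z2
  proof -
    define p1 where "p1 = prox L phi z1"
    define p2 where "p2 = prox L phi z2"
    define v where "v = p2 - p1"
    define e where "e = z2 - z1"
    define A where "A = (p1 - z1) \<bullet> (L *v (p2 - p1)) + (p2 - p1) \<bullet> (L *v (p1 - z1))"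
    define B where "B = (p2 - z2) \<bullet> (L *v (p1 - p2)) + (p1 - p2) \<bullet> (L *v (p2 - z2))"
    have vi1: "0 \<le> phi p2 - phi p1 + (1/2) * A"
      unfolding p1_def A_def by (rule prox_vi[OF cv prox_min[OF cv L_pd] L_pd])
    have vi2: "0 \<le> phi p1 - phi p2 + (1/2) * B"
      unfolding p2_def B_def by (rule prox_vi[OF cv prox_min[OF cv L_pd] L_pd])
    have iden: "A + B = e \<bullet> (L *v v) + v \<bullet> (L *v e) - 2 * (v \<bullet> (L *v v))"
      unfolding v_def e_def A_def B_def
      by (simp add: inner_diff_left inner_diff_right matrix_vector_mult_diff_distrib algebra_simps)
    have "2 * (v \<bullet> (L *v v)) \<le> e \<bullet> (L *v v) + v \<bullet> (L *v e)"
      using vi1 vi2 iden by linarith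
    also have "\<dots> \<le> 2 * (C * norm e * norm v)"
      using C(2)[of e v] C(2)[of v e] by (simp add: abs_le_iff algebra_simps)
    finally have "lam * (norm v)^2 \<le> C * norm e * norm v" using lam(2)[of v] by simp
    then have "norm v * (lam * norm v) \<le> norm v * (C * norm e)"
      by (simp add: power2_eq_square algebra_simps)
    then have "lam * norm v \<le> C * norm e" if "v \<noteq> 0" using that by simp
    then have "norm v \<le> (C / lam) * norm e"
      using lam(1) C(1) by (cases "v = 0") (auto simp: pos_le_divide_eq field_simps)
    then show ?thesis unfolding v_def e_def p1_def p2_def .
  qed
  moreover have "C / lam \<ge> 0" using C(1) lam(1) by simp
  ultimately show ?thesis by blast
qed

lemma part_b:
  fixes f phi :: "real^'n \<Rightarrow> real" and L :: "real^'n^'n"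
  assumes f_C1: "continuous_on UNIV (grad f)" and cv: "convex_on UNIV phi"
    and L_pd: "\<forall>v. v \<noteq> 0 \<longrightarrow> v \<bullet> (L *v v) > 0"
  shows "locally_bounded_away (F_nat L f phi)"
proof -
  obtain K where K: "K \<ge> 0" "\<And>z1 z2. norm (prox L phi z2 - prox L phi z1) \<le> K * norm (z2 - z1)"
    using prox_lip[OF cv L_pd] by blast
  have "K-lipschitz_on UNIV (prox L phi)"
    by (rule lipschitz_onI) (use K in \<open>auto simp: dist_norm\<close>)
  then have pc: "continuous_on UNIV (prox L phi)" by (rule lipschitz_on_continuous_on)
  have Fc: "continuous_on UNIV (F_nat L f phi)"
    unfolding F_nat_def[abs_def]
    by (intro continuous_intros continuous_on_compose2[OF pc]
        bounded_linear.continuous_on[OF matrix_vector_mul_bounded_linear] f_C1) auto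
  show ?thesis unfolding locally_bounded_away_def
  proof (intro allI impI)
    fix x assume Fx: "F_nat L f phi x \<noteq> 0"
    have "open {y. norm (F_nat L f phi x) / 2 < norm (F_nat L f phi y)}"
      by (rule open_Collect_less) (intro continuous_intros Fc)+
    moreover have "x \<in> {y. norm (F_nat L f phi x) / 2 < norm (F_nat L f phi y)}" using Fx by simp
    ultimately obtain r where r: "r > 0" "ball x r \<subseteq> {y. norm (F_nat L f phi x) / 2 < norm (F_nat L f phi y)}"
      using open_contains_ball by blast
    have "\<forall>y\<in>ball x r. norm (F_nat L f phi y) \<ge> norm (F_nat L f phi x) / 2"
      using r(2) by fastforce
    moreover have "norm (F_nat L f phi x) / 2 > 0" using Fx by simp
    ultimately show "\<exists>r>0. \<exists>\<epsilon>>0. \<forall>y\<in>ball x r. \<epsilon> \<le> norm (F_nat L f phi y)"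
      using r(1) by blast
  qed
qed

theorem lemma4p2:
  fixes f phi :: "real^'n \<Rightarrow> real" and L :: "real^'n^'n"
  assumes f_diff: "\<forall>x. f differentiable (at x)"
    and f_C1: "continuous_on UNIV (grad f)"
    and phi_convex: "convex_on UNIV phi"
    and L_sym: "transpose L = L"
    and L_pd: "\<forall>v. v \<noteq> 0 \<longrightarrow> v \<bullet> (L *v v) > 0"
  shows "locally_bounded_away
           (\<lambda>x. dir_deriv (\<lambda>y. f y + phi y) x (steepest_dir f phi x) *\<^sub>R steepest_dir f phi x)
       \<and> locally_bounded_away (F_nat L f phi)"
  using part_a[OF f_diff f_C1 phi_convex] part_b[OF f_C1 phi_convex L_pd] by blast

end
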